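(* Let $\rho$ be a representation of $D^{2,2,2}$, let $\{i,j,k\}=\{1,2,3\}$, and let $n\ge1$. Then: 1. $\varphi_i(\Phi^+\rho(a^{ij}_n))=\rho(y_iA^{kj}_n)$; 2. $\varphi_j(\Phi^+\rho(a^{ij}_n))=\rho(y_jA^{kj}_n)$ for $n>1$, and $\varphi_j(\Phi^+\rho(a^{ij}_1))=\rho(y_j(y_i+y_k)A^{kj}_1)$; 3. $\varphi_k(\Phi^+\rho(y_ia^{ij}_n))=\rho(y_kA^{ji}_{n+1})$; 4. $\varphi_i(\Phi^+\rho(A^{ij}_n))=\rho(y_i(y_j+y_k)a^{ik}_n)$; 5. $\varphi_j(\Phi^+\rho(y_kA^{ij}_n))=\rho(y_j(x_k+y_i)a^{ik}_n)$; 6. $\varphi_k(\Phi^+\rho(y_jA^{ij}_n))=\rho(y_ka^{ji}_{n+1})$.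
   Context: $D^{2,2,2}$ is the modular lattice generated by $x_1,y_1,x_2,y_2,x_3,y_3$ subject only to $x_i\subseteq y_i$ ($i=1,2,3$), with a greatest element $I$ adjoined. Meet is written $ab$, join $a+b$. Atomic elements: for distinct $i,j$, let $k$ denote the third index. Define - $a^{ij}_0=I$ and $a^{ij}_n=x_i+y_ja^{jk}_{n-1}$ for $n\ge1$; - $A^{ij}_0=I$ and $A^{ij}_n=y_i+x_jA^{ki}_{n-1}$ for $n\ge1$. A representation $\rho$ of $D^{2,2,2}$ in a finite-dimensional vector space $X_0$ is a lattice morphism from $D^{2,2,2}$ to the subspace lattice of $X_0$, with $\rho(I)=X_0$. Write $X_i=\rho(x_i)\subseteq Y_i=\rho(y_i)$. Put $R=Y_1\oplus Y_2\oplus Y_3$ and $X^1_0=\{(\eta_1,\eta_2,\eta_3)\in R:\sum\eta_i=0\}$. Let $G'_i\subseteq R$ be the triples with $i$-th coordinate in $X_i$, and $H'_i\subseteq R$ the triples with $i$-th coordinate $0$. $\Phi^+\rho$ is the representation in $X^1_0$ with $\Phi^+\rho(y_i)=G'_i\cap X^1_0$, $\Phi^+\rho(x_i)=H'_i\cap X^1_0$, $\Phi^+\rho(I)=X^1_0$. The elementary map $\varphi_i:X^1_0\to X_0$ is $(\eta_1,\eta_2,\eta_3)\mapsto\eta_i$; $\varphi_i(S)$ denotes the image of a subspace $S$. *)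

theory Defs
  imports Complex_Main "HOL-Library.Product_Plus"
begin

text \<open>Since D^{2,2,2} is the modular lattice freely generated subject only to x_i <= y_i
  (with a top I adjoined), a representation is the same as a choice of subspaces
  X_i \<subseteq> Y_i \<subseteq> X_0, and the image of a lattice element is the evaluation of
  any term for it (meet = intersection, join = subspace sum, I = X_0).\<close>

datatype lterm = TopI | Xg nat | Yg nat | Meet lterm lterm | Join lterm lterm

definition ssum :: "'v::plus set \<Rightarrow> 'v set \<Rightarrow> 'v set" where
  "ssum A B = {a + b | a b. a \<in> A \<and> b \<in> B}"

fun rep_eval :: "'v::plus set \<Rightarrow> (nat \<Rightarrow> 'v set) \<Rightarrow> (nat \<Rightarrow> 'v set) \<Rightarrow> lterm \<Rightarrow> 'v set" where
  "rep_eval X0 X Y TopI = X0"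
| "rep_eval X0 X Y (Xg i) = X i"
| "rep_eval X0 X Y (Yg i) = Y i"
| "rep_eval X0 X Y (Meet s t) = rep_eval X0 X Y s \<inter> rep_eval X0 X Y t"
| "rep_eval X0 X Y (Join s t) = ssum (rep_eval X0 X Y s) (rep_eval X0 X Y t)"

definition third :: "nat \<Rightarrow> nat \<Rightarrow> nat" where
  "third i j = 6 - i - j"

fun a_at :: "nat \<Rightarrow> nat \<Rightarrow> nat \<Rightarrow> lterm" where
  "a_at i j 0 = TopI"
| "a_at i j (Suc n) = Join (Xg i) (Meet (Yg j) (a_at j (third i j) n))"

fun A_at :: "nat \<Rightarrow> nat \<Rightarrow> nat \<Rightarrow> lterm" where
  "A_at i j 0 = TopI"
| "A_at i j (Suc n) = Join (Yg i) (Meet (Xg j) (A_at (third i j) i n))"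

definition is_rep :: "('k::field \<Rightarrow> 'v::ab_group_add \<Rightarrow> 'v) \<Rightarrow> 'v set \<Rightarrow> (nat \<Rightarrow> 'v set) \<Rightarrow> (nat \<Rightarrow> 'v set) \<Rightarrow> bool" where
  "is_rep scale X0 X Y \<longleftrightarrow>
     module.subspace scale X0 \<and> (\<exists>B. finite B \<and> X0 = module.span scale B) \<and>
     (\<forall>i\<in>{1,2,3}. module.subspace scale (X i) \<and> module.subspace scale (Y i) \<and>
        X i \<subseteq> Y i \<and> Y i \<subseteq> X0)"

fun coord :: "nat \<Rightarrow> 'v \<times> 'v \<times> 'v \<Rightarrow> 'v" where
  "coord i (e1, e2, e3) = (if i = 1 then e1 else if i = 2 then e2 else e3)"

definition phi :: "nat \<Rightarrow> ('v \<times> 'v \<times> 'v) set \<Rightarrow> 'v set" where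
  "phi i S = coord i ` S"

definition PhiP_X0 :: "(nat \<Rightarrow> 'v::ab_group_add set) \<Rightarrow> ('v \<times> 'v \<times> 'v) set" where
  "PhiP_X0 Y = {(e1, e2, e3). e1 \<in> Y 1 \<and> e2 \<in> Y 2 \<and> e3 \<in> Y 3 \<and> e1 + e2 + e3 = 0}"

definition PhiP_Y :: "(nat \<Rightarrow> 'v::ab_group_add set) \<Rightarrow> (nat \<Rightarrow> 'v set) \<Rightarrow> nat \<Rightarrow> ('v \<times> 'v \<times> 'v) set" where
  "PhiP_Y X Y i = {e \<in> PhiP_X0 Y. coord i e \<in> X i}"

definition PhiP_X :: "(nat \<Rightarrow> 'v::ab_group_add set) \<Rightarrow> nat \<Rightarrow> ('v \<times> 'v \<times> 'v) set" where
  "PhiP_X Y i = {e \<in> PhiP_X0 Y. coord i e = 0}"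

definition PhiP_eval :: "(nat \<Rightarrow> 'v::ab_group_add set) \<Rightarrow> (nat \<Rightarrow> 'v set) \<Rightarrow> lterm \<Rightarrow> ('v \<times> 'v \<times> 'v) set" where
  "PhiP_eval X Y t = rep_eval (PhiP_X0 Y) (PhiP_X Y) (PhiP_Y X Y) t"

end

theory Submission
  imports Defs
begin

definition grp :: "'v::ab_group_add set \<Rightarrow> bool" where
  "grp S \<longleftrightarrow> 0 \<in> S \<and> (\<forall>x\<in>S. \<forall>y\<in>S. x + y \<in> S) \<and> (\<forall>x\<in>S. - x \<in> S)"

lemma ssum_mem: "x \<in> ssum A B \<longleftrightarrow> (\<exists>a\<in>A. \<exists>b\<in>B. x = a + b)"
  by (auto simp: ssum_def)

lemma grp_0: "grp S \<Longrightarrow> 0 \<in> S" by (simp add: grp_def)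
lemma grp_add: "grp S \<Longrightarrow> x \<in> S \<Longrightarrow> y \<in> S \<Longrightarrow> x + y \<in> S" by (simp add: grp_def)
lemma grp_neg: "grp S \<Longrightarrow> x \<in> S \<Longrightarrow> - x \<in> S" by (simp add: grp_def)
lemma grp_diff: "grp S \<Longrightarrow> x \<in> S \<Longrightarrow> y \<in> S \<Longrightarrow> x - y \<in> S"
  using grp_add[of S x "- y"] grp_neg[of S y] by simp
lemma grp_UNIV: "grp UNIV" by (simp add: grp_def)
lemma grp_Int: "grp A \<Longrightarrow> grp B \<Longrightarrow> grp (A \<inter> B)" by (simp add: grp_def)
lemma grp_ssum: assumes "grp A" "grp B" shows "grp (ssum A B)"
proof -
  have "0 \<in> ssum A B" using assms by (metis add_0 grp_0 ssum_mem)
  moreover have "\<forall>x\<in>ssum A B. \<forall>y\<in>ssum A B. x + y \<in> ssum A B"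
  proof (intro ballI)
    fix x y assume "x \<in> ssum A B" "y \<in> ssum A B"
    then obtain a b a' b' where "a\<in>A" "b\<in>B" "a'\<in>A" "b'\<in>B" "x = a + b" "y = a' + b'"
      by (auto simp: ssum_mem)
    then have "x + y = (a + a') + (b + b')" by (simp add: ac_simps)
    moreover have "a + a' \<in> A" "b + b' \<in> B" using assms \<open>a\<in>A\<close> \<open>b\<in>B\<close> \<open>a'\<in>A\<close> \<open>b'\<in>B\<close>
      by (auto intro: grp_add)
    ultimately show "x + y \<in> ssum A B" unfolding ssum_mem by blast
  qed
  moreover have "\<forall>x\<in>ssum A B. - x \<in> ssum A B"
  proof
    fix x assume "x \<in> ssum A B"
    then obtain a b where "a\<in>A" "b\<in>B" "x = a + b" by (auto simp: ssum_mem)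
    then have "- x = (- a) + (- b)" by simp
    moreover have "- a \<in> A" "- b \<in> B" using assms \<open>a\<in>A\<close> \<open>b\<in>B\<close> by (auto intro: grp_neg)
    ultimately show "- x \<in> ssum A B" unfolding ssum_mem by blast
  qed
  ultimately show ?thesis by (simp add: grp_def)
qed

lemma third_props:
  assumes "i \<in> {1,2,3}" "j \<in> {1,2,3}" "i \<noteq> j"
  shows "third i j \<in> {1,2,3} \<and> third i j \<noteq> i \<and> third i j \<noteq> j \<and> {i, j, third i j} = {1,2,3}"
  using assms unfolding third_def by (simp, elim disjE, simp_all add: insert_commute)

definition perm3 :: "nat \<Rightarrow> nat \<Rightarrow> nat \<Rightarrow> bool" where
  "perm3 i j k \<longleftrightarrow> {i, j, k} = {1,2,3}"

lemma perm6: "perm3 i j k \<Longrightarrow>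
  (i=1 \<and> j=2 \<and> k=3) \<or> (i=1 \<and> j=3 \<and> k=2) \<or> (i=2 \<and> j=1 \<and> k=3) \<or>
  (i=2 \<and> j=3 \<and> k=1) \<or> (i=3 \<and> j=1 \<and> k=2) \<or> (i=3 \<and> j=2 \<and> k=1)"
proof -
  assume h: "perm3 i j k"
  have e: "{i,j,k} = {1,2,3}" using h unfolding perm3_def .
  have m1: "i \<in> {1,2,3}" "j \<in> {1,2,3}" "k \<in> {1,2,3}" unfolding e[symmetric] by simp_all
  have m2: "1 \<in> {i,j,k}" "2 \<in> {i,j,k}" "3 \<in> {i,j,k}" unfolding e by simp_all
  have "\<forall>i\<in>{1::nat,2,3}. \<forall>j\<in>{1::nat,2,3}. \<forall>k\<in>{1::nat,2,3}. 1 \<in> {i,j,k} \<longrightarrow> 2 \<in> {i,j,k} \<longrightarrow> 3 \<in> {i,j,k} \<longrightarrow>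
  (i=1 \<and> j=2 \<and> k=3) \<or> (i=1 \<and> j=3 \<and> k=2) \<or> (i=2 \<and> j=1 \<and> k=3) \<or>
  (i=2 \<and> j=3 \<and> k=1) \<or> (i=3 \<and> j=1 \<and> k=2) \<or> (i=3 \<and> j=2 \<and> k=1)"
    by simp
  from this[rule_format, OF m1 m2] show ?thesis .
qed

lemma perm3_props: "perm3 i j k \<Longrightarrow> i \<in> {1,2,3} \<and> j \<in> {1,2,3} \<and> k \<in> {1,2,3} \<and> i \<noteq> j \<and> i \<noteq> k \<and> j \<noteq> k
   \<and> third i j = k \<and> third j i = k \<and> third i k = j \<and> third k i = j \<and> third j k = i \<and> third k j = i"
  by (drule perm6) (auto simp: third_def)

lemma perm3_rot: "perm3 i j k \<Longrightarrow> perm3 j k i" "perm3 i j k \<Longrightarrow> perm3 i k j"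
  "perm3 i j k \<Longrightarrow> perm3 j i k" "perm3 i j k \<Longrightarrow> perm3 k i j" "perm3 i j k \<Longrightarrow> perm3 k j i"
  unfolding perm3_def by (metis insert_commute)+

lemma coord_f: "l \<in> {1,2,3} \<Longrightarrow> coord l (f 1, f 2, f 3) = f l"
  by auto

lemma coord_add: "coord l (e + f) = coord l e + coord l f"
  by (cases e; cases f) auto
lemma coord_minus: "coord l (- e) = - coord l e"
  by (cases e) auto
lemma coord_diff: "coord l (e - f) = coord l e - coord l f"
  by (cases e; cases f) auto
lemma coord_zero: "coord l 0 = 0"
  by (simp add: zero_prod_def)


lemma ssum_I: "a \<in> A \<Longrightarrow> b \<in> B \<Longrightarrow> a + b \<in> ssum A B"
  unfolding ssum_mem by blast
lemma ssum_left: fixes a :: "'a::monoid_add" shows "a \<in> A \<Longrightarrow> 0 \<in> B \<Longrightarrow> a \<in> ssum A B"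
  using ssum_I[of a A 0 B] by simp
lemma ssum_right: fixes b :: "'a::monoid_add" shows "0 \<in> A \<Longrightarrow> b \<in> B \<Longrightarrow> b \<in> ssum A B"
  using ssum_I[of 0 A b B] by simp
lemma ssum_comm: fixes A :: "'a::ab_semigroup_add set" shows "ssum A B = ssum B A"
  unfolding ssum_def by (auto simp: add.commute) (metis add.commute)+

lemma solve3:
  fixes a b c :: "'a::ab_group_add"
  assumes "a + b + c = 0"
  shows "a = - b - c" "b = - a - c" "c = - a - b"
proof -
  show "a = - b - c" using assms by (metis add.assoc add.commute add_uminus_conv_diff minus_add_distrib neg_eq_iff_add_eq_0)
  show "b = - a - c" using assms by (metis add.assoc add.commute add_uminus_conv_diff minus_add_distrib neg_eq_iff_add_eq_0)
  show "c = - a - b" using assms by (metis add.commute add_uminus_conv_diff minus_add_distrib neg_eq_iff_add_eq_0)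
qed

lemma perm3_123: "perm3 1 2 3" by (simp add: perm3_def)

locale reps =
  fixes X0 :: "'v::ab_group_add set" and X Y :: "nat \<Rightarrow> 'v set"
  assumes g0: "grp X0" and gX: "l \<in> {1,2,3} \<Longrightarrow> grp (X l)" and gY: "l \<in> {1,2,3} \<Longrightarrow> grp (Y l)"
    and XY: "l \<in> {1,2,3} \<Longrightarrow> X l \<subseteq> Y l" and YX0: "l \<in> {1,2,3} \<Longrightarrow> Y l \<subseteq> X0"
begin

abbreviation "rho t \<equiv> rep_eval X0 X Y t"
abbreviation "Z \<equiv> PhiP_X0 Y"
abbreviation "P t \<equiv> PhiP_eval X Y t"

lemma rho_props: "i \<in> {1,2,3} \<Longrightarrow> j \<in> {1,2,3} \<Longrightarrow> i \<noteq> j \<Longrightarrow>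
  grp (rho (a_at i j n)) \<and> grp (rho (A_at i j n)) \<and> X i \<subseteq> rho (a_at i j n)"
proof (induction n arbitrary: i j)
  case 0 thus ?case using g0 XY YX0 by auto
next
  case (Suc n)
  let ?t = "third i j"
  have t: "?t \<in> {1,2,3}" "?t \<noteq> i" "?t \<noteq> j" using third_props[OF Suc.prems] by auto
  have IH1: "grp (rho (a_at j ?t n))" using Suc.IH[of j ?t] Suc.prems t by auto
  have IH2: "grp (rho (A_at ?t i n))" using Suc.IH[of ?t i] Suc.prems t by auto
  have g1: "grp (rho (a_at i j (Suc n)))" using IH1 gX gY Suc.prems by (simp add: grp_ssum grp_Int)
  have g2: "grp (rho (A_at i j (Suc n)))" using IH2 gX gY Suc.prems by (simp add: grp_ssum grp_Int)
  have "X i \<subseteq> rho (a_at i j (Suc n))"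
  proof
    fix x assume "x \<in> X i"
    moreover have "0 \<in> Y j \<inter> rho (a_at j ?t n)" using IH1 gY Suc.prems by (simp add: grp_0)
    ultimately show "x \<in> rho (a_at i j (Suc n))" by (simp add: ssum_left)
  qed
  then show ?case using g1 g2 by blast
qed

lemma Zmem: "perm3 i j k \<Longrightarrow> e \<in> Z \<longleftrightarrow> coord i e \<in> Y i \<and> coord j e \<in> Y j \<and> coord k e \<in> Y k
   \<and> coord i e + coord j e + coord k e = 0"
  apply (cases e)
  apply (drule perm6)
  apply (elim disjE)
  apply (simp_all add: PhiP_X0_def ac_simps)
  done

lemma mk: assumes h: "perm3 i j k" shows "\<exists>e. coord i e = a \<and> coord j e = b \<and> coord k e = c"
proof -
  define f where "f l = (if l = i then a else if l = j then b else c)" for l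
  have p: "i \<in> {1,2,3}" "j \<in> {1,2,3}" "k \<in> {1,2,3}" "i \<noteq> j" "i \<noteq> k" "j \<noteq> k"
    using perm3_props[OF h] by auto
  have "coord i (f 1, f 2, f 3) = a" "coord j (f 1, f 2, f 3) = b" "coord k (f 1, f 2, f 3) = c"
    using coord_f[of _ f] p unfolding f_def by auto
  then show ?thesis by blast
qed

lemma Z_add: "e \<in> Z \<Longrightarrow> f \<in> Z \<Longrightarrow> e + f \<in> Z"
proof -
  assume a: "e \<in> Z" "f \<in> Z"
  have l: "(1::nat) \<in> {1,2,3}" "(2::nat) \<in> {1,2,3}" "(3::nat) \<in> {1,2,3}" by simp_all
  note ze = Zmem[OF perm3_123, THEN iffD1, OF a(1)] and zf = Zmem[OF perm3_123, THEN iffD1, OF a(2)]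
  have eq: "coord 1 e + coord 1 f + (coord 2 e + coord 2 f) + (coord 3 e + coord 3 f)
      = (coord 1 e + coord 2 e + coord 3 e) + (coord 1 f + coord 2 f + coord 3 f)" by (simp add: ac_simps)
  have s: "coord 1 e + coord 1 f + (coord 2 e + coord 2 f) + (coord 3 e + coord 3 f) = 0"
    unfolding eq using ze zf by simp
  have "coord 1 (e+f) \<in> Y 1" "coord 2 (e+f) \<in> Y 2" "coord 3 (e+f) \<in> Y 3"
    using ze zf grp_add[OF gY[OF l(1)]] grp_add[OF gY[OF l(2)]] grp_add[OF gY[OF l(3)]]
    by (simp_all add: coord_add)
  then show ?thesis using Zmem[OF perm3_123] s by (simp only: coord_add)
qed

lemma Z_diff: "e \<in> Z \<Longrightarrow> f \<in> Z \<Longrightarrow> e - f \<in> Z"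
proof -
  assume a: "e \<in> Z" "f \<in> Z"
  have l: "(1::nat) \<in> {1,2,3}" "(2::nat) \<in> {1,2,3}" "(3::nat) \<in> {1,2,3}" by simp_all
  note ze = Zmem[OF perm3_123, THEN iffD1, OF a(1)] and zf = Zmem[OF perm3_123, THEN iffD1, OF a(2)]
  have eq: "coord 1 e - coord 1 f + (coord 2 e - coord 2 f) + (coord 3 e - coord 3 f)
      = (coord 1 e + coord 2 e + coord 3 e) - (coord 1 f + coord 2 f + coord 3 f)" by (simp add: algebra_simps)
  have s: "coord 1 e - coord 1 f + (coord 2 e - coord 2 f) + (coord 3 e - coord 3 f) = 0"
    unfolding eq using ze zf by simp
  have "coord 1 (e-f) \<in> Y 1" "coord 2 (e-f) \<in> Y 2" "coord 3 (e-f) \<in> Y 3"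
    using ze zf grp_diff[OF gY[OF l(1)]] grp_diff[OF gY[OF l(2)]] grp_diff[OF gY[OF l(3)]]
    by (simp_all add: coord_diff)
  then show ?thesis using Zmem[OF perm3_123] s by (simp only: coord_diff)
qed

lemma img:
  assumes h: "perm3 i j k" and gi: "grp Ri" and gj: "grp Rj"
  shows "phi k {e \<in> Z. coord i e \<in> Ri \<and> coord j e \<in> Rj \<and> coord k e \<in> Rk}
       = Y k \<inter> Rk \<inter> ssum (Y i \<inter> Ri) (Y j \<inter> Rj)"
proof (rule set_eqI, rule iffI)
  have p: "i \<in> {1,2,3}" "j \<in> {1,2,3}" "k \<in> {1,2,3}" using perm3_props[OF h] by auto
  fix v assume "v \<in> phi k {e \<in> Z. coord i e \<in> Ri \<and> coord j e \<in> Rj \<and> coord k e \<in> Rk}"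
  then obtain e where e: "e \<in> Z" "coord i e \<in> Ri" "coord j e \<in> Rj" "coord k e \<in> Rk" "v = coord k e"
    by (auto simp: phi_def)
  have z: "coord i e \<in> Y i" "coord j e \<in> Y j" "coord k e \<in> Y k" "coord i e + coord j e + coord k e = 0"
    using Zmem[OF h] e(1) by auto
  have v: "v = - coord i e + - coord j e" using solve3(3)[OF z(4)] e(5) by simp
  have "- coord i e \<in> Y i \<inter> Ri" "- coord j e \<in> Y j \<inter> Rj"
    using z e gi gj gY[OF p(1)] gY[OF p(2)] by (simp_all add: grp_neg)
  then have "v \<in> ssum (Y i \<inter> Ri) (Y j \<inter> Rj)" unfolding v by (rule ssum_I)
  then show "v \<in> Y k \<inter> Rk \<inter> ssum (Y i \<inter> Ri) (Y j \<inter> Rj)" using e z by auto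
next
  have p: "i \<in> {1,2,3}" "j \<in> {1,2,3}" "k \<in> {1,2,3}" using perm3_props[OF h] by auto
  fix v assume "v \<in> Y k \<inter> Rk \<inter> ssum (Y i \<inter> Ri) (Y j \<inter> Rj)"
  then obtain a b where ab: "v \<in> Y k" "v \<in> Rk" "a \<in> Y i" "a \<in> Ri" "b \<in> Y j" "b \<in> Rj" "v = a + b"
    by (auto simp: ssum_mem)
  obtain e where e: "coord i e = - a" "coord j e = - b" "coord k e = v"
    using mk[OF h, where a="- a" and b="- b" and c=v] by (elim exE conjE) (rule that)
  have na: "- a \<in> Y i" "- a \<in> Ri" using ab gY[OF p(1)] gi by (simp_all add: grp_neg)
  have nb: "- b \<in> Y j" "- b \<in> Rj" using ab gY[OF p(2)] gj by (simp_all add: grp_neg)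
  have "e \<in> Z" unfolding Zmem[OF h] e using na nb ab by simp
  then have "e \<in> {e \<in> Z. coord i e \<in> Ri \<and> coord j e \<in> Rj \<and> coord k e \<in> Rk}"
    using e na nb ab by simp
  then show "v \<in> phi k {e \<in> Z. coord i e \<in> Ri \<and> coord j e \<in> Rj \<and> coord k e \<in> Rk}"
    unfolding phi_def by (rule image_eqI[rotated]) (simp add: e)
qed

lemma L1: "perm3 i j k \<Longrightarrow> P (a_at i j n) = {e \<in> Z. coord i e \<in> rho (A_at k j n)}"
proof (induction n arbitrary: i j k)
  case 0
  have p: "i \<in> {1,2,3}" using perm3_props[OF 0] by auto
  show ?case using Zmem[OF 0] YX0[OF p] by (auto simp: PhiP_eval_def)
next
  case (Suc n)
  have h: "perm3 i j k" by fact
  note pp = perm3_props[OF h]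
  have p: "i \<in> {1,2,3}" "j \<in> {1,2,3}" "k \<in> {1,2,3}" using pp by auto
  let ?R = "rho (A_at i k n)"
  have gR: "grp ?R" using rho_props[of i k n] pp by auto
  have IH: "P (a_at j k n) = {e \<in> Z. coord j e \<in> ?R}" using Suc.IH[of j k i] perm3_rot(1)[OF h] by blast
  have lhs: "P (a_at i j (Suc n)) = ssum {e \<in> Z. coord i e = 0} {e \<in> Z. coord j e \<in> X j \<inter> ?R}"
  proof -
    have "P (a_at i j (Suc n)) = ssum (PhiP_X Y i) (PhiP_Y X Y j \<inter> P (a_at j k n))"
      using pp by (simp only: a_at.simps A_at.simps PhiP_eval_def rep_eval.simps)
    moreover have "PhiP_X Y i = {e \<in> Z. coord i e = 0}" by (simp add: PhiP_X_def)
    moreover have "PhiP_Y X Y j \<inter> {e \<in> Z. coord j e \<in> ?R} = {e \<in> Z. coord j e \<in> X j \<inter> ?R}"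
      by (auto simp: PhiP_Y_def)
    ultimately show ?thesis unfolding IH by simp
  qed
  have rhs: "rho (A_at k j (Suc n)) = ssum (Y k) (X j \<inter> ?R)" using pp by (simp only: a_at.simps A_at.simps rep_eval.simps)
  show ?case unfolding lhs rhs
  proof (rule set_eqI, rule iffI)
    fix e assume "e \<in> ssum {e \<in> Z. coord i e = 0} {e \<in> Z. coord j e \<in> X j \<inter> ?R}"
    then obtain h g where hg: "h \<in> Z" "coord i h = 0" "g \<in> Z" "coord j g \<in> X j" "coord j g \<in> ?R" "e = h + g"
      by (auto simp: ssum_mem)
    have gz: "coord i g \<in> Y i" "coord j g \<in> Y j" "coord k g \<in> Y k" "coord i g + coord j g + coord k g = 0"
      using Zmem[OF h] hg(3) by auto
    have "coord i e = coord i g" using hg by (simp add: coord_add)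
    also have "\<dots> = (- coord k g) + (- coord j g)" using solve3(1)[OF gz(4)] by (simp add: algebra_simps)
    finally have ce: "coord i e = (- coord k g) + (- coord j g)" .
    have "- coord k g \<in> Y k" "- coord j g \<in> X j \<inter> ?R"
      using gz hg gR gY[OF p(3)] gX[OF p(2)] by (auto intro: grp_neg)
    then have "coord i e \<in> ssum (Y k) (X j \<inter> ?R)" unfolding ce by (rule ssum_I)
    moreover have "e \<in> Z" using hg Z_add by simp
    ultimately show "e \<in> {e \<in> Z. coord i e \<in> ssum (Y k) (X j \<inter> ?R)}" by simp
  next
    fix e assume "e \<in> {e \<in> Z. coord i e \<in> ssum (Y k) (X j \<inter> ?R)}"
    then obtain y x where e: "e \<in> Z" "y \<in> Y k" "x \<in> X j" "x \<in> ?R" "coord i e = y + x"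
      by (auto simp: ssum_mem)
    have ez: "coord i e \<in> Y i" using Zmem[OF h] e(1) by auto
    obtain g where g: "coord i g = coord i e" "coord j g = - x" "coord k g = - y"
      using mk[OF h, where a="coord i e" and b="- x" and c="- y"] by (elim exE conjE) (rule that)
    have xY: "x \<in> Y j" using XY[OF p(2)] e(3) by auto
    have gZ: "g \<in> Z" using Zmem[OF h] g ez xY e(2) e(5) gY[OF p(2)] gY[OF p(3)] by (auto intro: grp_neg)
    have gj: "coord j g \<in> X j \<inter> ?R" using g e gX[OF p(2)] gR by (auto intro: grp_neg)
    have hZ: "e - g \<in> Z" using Z_diff e(1) gZ by simp
    have hi: "coord i (e - g) = 0" using g by (simp add: coord_diff)
    have "e = (e - g) + g" by simp
    moreover have "(e - g) + g \<in> ssum {e \<in> Z. coord i e = 0} {e \<in> Z. coord j e \<in> X j \<inter> ?R}"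
      by (rule ssum_I) (use hZ hi gZ gj in auto)
    ultimately show "e \<in> ssum {e \<in> Z. coord i e = 0} {e \<in> Z. coord j e \<in> X j \<inter> ?R}" by simp
  qed
qed

lemma L4: "perm3 i j k \<Longrightarrow> P (A_at i j n) = {e \<in> Z. coord i e \<in> Y i \<inter> ssum (Y j) (Y k) \<inter> rho (a_at i k n)}"
proof (induction n arbitrary: i j k)
  case 0
  have h: "perm3 i j k" by fact
  have p: "i \<in> {1,2,3}" "j \<in> {1,2,3}" "k \<in> {1,2,3}" using perm3_props[OF h] by auto
  have "coord i e \<in> ssum (Y j) (Y k) \<and> coord i e \<in> X0" if "e \<in> Z" for e
  proof -
    have z: "coord i e \<in> Y i" "coord j e \<in> Y j" "coord k e \<in> Y k" "coord i e + coord j e + coord k e = 0"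
      using Zmem[OF h] that by auto
    have ce: "coord i e = (- coord j e) + (- coord k e)" using solve3(1)[OF z(4)] by simp
    have "- coord j e \<in> Y j" "- coord k e \<in> Y k" using z gY[OF p(2)] gY[OF p(3)] by (auto intro: grp_neg)
    then have "coord i e \<in> ssum (Y j) (Y k)" unfolding ce by (rule ssum_I)
    then show ?thesis using z YX0[OF p(1)] by auto
  qed
  then show ?case using Zmem[OF h] by (auto simp: PhiP_eval_def)
next
  case (Suc n)
  have h: "perm3 i j k" by fact
  note pp = perm3_props[OF h]
  have p: "i \<in> {1,2,3}" "j \<in> {1,2,3}" "k \<in> {1,2,3}" using pp by auto
  let ?R = "rho (a_at k j n)"
  have gR: "grp ?R" using rho_props[of k j n] pp by auto
  have IH: "P (A_at k i n) = {e \<in> Z. coord k e \<in> Y k \<inter> ssum (Y i) (Y j) \<inter> ?R}"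
    using Suc.IH[of k i j] perm3_rot(4)[OF h] by blast
  have lhs: "P (A_at i j (Suc n)) = ssum {e \<in> Z. coord i e \<in> X i}
      {e \<in> Z. coord j e = 0 \<and> coord k e \<in> Y k \<inter> ssum (Y i) (Y j) \<inter> ?R}"
  proof -
    have "P (A_at i j (Suc n)) = ssum (PhiP_Y X Y i) (PhiP_X Y j \<inter> P (A_at k i n))"
      using pp by (simp only: a_at.simps A_at.simps PhiP_eval_def rep_eval.simps)
    moreover have "PhiP_Y X Y i = {e \<in> Z. coord i e \<in> X i}" by (simp add: PhiP_Y_def)
    moreover have "PhiP_X Y j \<inter> {e \<in> Z. coord k e \<in> Y k \<inter> ssum (Y i) (Y j) \<inter> ?R}
       = {e \<in> Z. coord j e = 0 \<and> coord k e \<in> Y k \<inter> ssum (Y i) (Y j) \<inter> ?R}"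
      by (auto simp: PhiP_X_def)
    ultimately show ?thesis unfolding IH by simp
  qed
  have rhs: "rho (a_at i k (Suc n)) = ssum (X i) (Y k \<inter> ?R)" using pp by (simp only: a_at.simps A_at.simps rep_eval.simps)
  show ?case unfolding lhs rhs
  proof (rule set_eqI, rule iffI)
    fix e assume "e \<in> ssum {e \<in> Z. coord i e \<in> X i}
      {e \<in> Z. coord j e = 0 \<and> coord k e \<in> Y k \<inter> ssum (Y i) (Y j) \<inter> ?R}"
    then obtain g h where hg: "g \<in> Z" "coord i g \<in> X i" "h \<in> Z" "coord j h = 0" "coord k h \<in> Y k"
       "coord k h \<in> ?R" "e = g + h"
      by (auto simp: ssum_mem)
    have hz: "coord i h + coord j h + coord k h = 0" using Zmem[OF h] hg(3) by auto
    have ci: "coord i h = - coord k h" using solve3(1)[OF hz] hg(4) by simp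
    have eZ: "e \<in> Z" using hg Z_add by simp
    have ez: "coord i e \<in> Y i" "coord j e \<in> Y j" "coord k e \<in> Y k" "coord i e + coord j e + coord k e = 0"
      using Zmem[OF h] eZ by auto
    have ce: "coord i e = (- coord j e) + (- coord k e)" using solve3(1)[OF ez(4)] by simp
    have "- coord j e \<in> Y j" "- coord k e \<in> Y k" using ez gY[OF p(2)] gY[OF p(3)] by (auto intro: grp_neg)
    then have s1: "coord i e \<in> ssum (Y j) (Y k)" unfolding ce by (rule ssum_I)
    have ce2: "coord i e = coord i g + (- coord k h)" using hg ci by (simp add: coord_add)
    have "- coord k h \<in> Y k \<inter> ?R" using hg gR gY[OF p(3)] by (auto intro: grp_neg)
    then have s2: "coord i e \<in> ssum (X i) (Y k \<inter> ?R)" unfolding ce2 using hg(2) by (intro ssum_I)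
    show "e \<in> {e \<in> Z. coord i e \<in> Y i \<inter> ssum (Y j) (Y k) \<inter> ssum (X i) (Y k \<inter> ?R)}"
      using eZ ez s1 s2 by simp
  next
    fix e assume "e \<in> {e \<in> Z. coord i e \<in> Y i \<inter> ssum (Y j) (Y k) \<inter> ssum (X i) (Y k \<inter> ?R)}"
    then have e0: "e \<in> Z" "coord i e \<in> Y i" "coord i e \<in> ssum (X i) (Y k \<inter> ?R)" by simp_all
    then obtain x z where xz: "x \<in> X i" "z \<in> Y k \<inter> ?R" "coord i e = x + z" unfolding ssum_mem by blast
    have e: "e \<in> Z" "coord i e \<in> Y i" "x \<in> X i" "z \<in> Y k" "z \<in> ?R" "coord i e = x + z"
      using e0 xz by auto
    have xY: "x \<in> Y i" using XY[OF p(1)] e(3) by auto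
    have zi: "z = coord i e - x" using e(6) by simp
    have zY: "z \<in> Y i" unfolding zi using e(2) xY gY[OF p(1)] by (rule grp_diff[rotated])
    obtain hh where hh: "coord i hh = z" "coord j hh = 0" "coord k hh = - z"
      using mk[OF h, where a="z" and b="0" and c="- z"] by (elim exE conjE) (rule that)
    have hZ: "hh \<in> Z" using Zmem[OF h] hh zY e(4) gY[OF p(2)] gY[OF p(3)] by (auto intro: grp_neg grp_0)
    have mz: "- z \<in> Y i" "- z \<in> Y k" "- z \<in> ?R" using zY e(4) e(5) gY[OF p(1)] gY[OF p(3)] gR by (auto intro: grp_neg)
    have "- z + 0 \<in> ssum (Y i) (Y j)" using mz gY[OF p(2)] by (intro ssum_I) (auto intro: grp_0)
    then have hk: "coord k hh \<in> Y k \<inter> ssum (Y i) (Y j) \<inter> ?R" using hh mz by simp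
    have gZ: "e - hh \<in> Z" using Z_diff e(1) hZ by simp
    have gi: "coord i (e - hh) \<in> X i" using hh e(6) e(3) by (simp add: coord_diff)
    have "e = (e - hh) + hh" by simp
    moreover have "(e - hh) + hh \<in> ssum {e \<in> Z. coord i e \<in> X i}
      {e \<in> Z. coord j e = 0 \<and> coord k e \<in> Y k \<inter> ssum (Y i) (Y j) \<inter> ?R}"
      by (rule ssum_I) (use gZ gi hZ hh hk in auto)
    ultimately show "e \<in> ssum {e \<in> Z. coord i e \<in> X i}
      {e \<in> Z. coord j e = 0 \<and> coord k e \<in> Y k \<inter> ssum (Y i) (Y j) \<inter> ?R}" by simp
  qed
qed

lemma P_Meet_Yg: "P (Meet (Yg l) t) = {e \<in> Z. coord l e \<in> X l} \<inter> P t"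
  by (simp add: PhiP_eval_def PhiP_Y_def)

lemma C1: assumes h: "perm3 i j k" and n: "1 \<le> n"
  shows "phi i (P (a_at i j n)) = rho (Meet (Yg i) (A_at k j n))"
proof -
  note pp = perm3_props[OF h]
  have p: "i \<in> {1,2,3}" "j \<in> {1,2,3}" "k \<in> {1,2,3}" using pp by auto
  let ?R = "rho (A_at k j n)"
  have s: "P (a_at i j n) = {e \<in> Z. coord j e \<in> UNIV \<and> coord k e \<in> UNIV \<and> coord i e \<in> ?R}"
    using L1[OF h] by simp
  have im: "phi i (P (a_at i j n)) = Y i \<inter> ?R \<inter> ssum (Y j \<inter> UNIV) (Y k \<inter> UNIV)"
    unfolding s by (rule img[OF perm3_rot(1)[OF h] grp_UNIV grp_UNIV])
  obtain m where m: "n = Suc m" using n by (cases n) auto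
  have tkj: "third k j = i" using pp by simp
  have Rm: "?R = ssum (Y k) (X j \<inter> rho (A_at i k m))" unfolding m by (simp add: tkj)
  have sub: "?R \<subseteq> ssum (Y j) (Y k)"
  proof
    fix r assume "r \<in> ?R"
    then obtain y x where yx: "y \<in> Y k" "x \<in> X j" "r = y + x" unfolding Rm ssum_mem by blast
    then have "r = x + y" "x \<in> Y j" using XY[OF p(2)] by (auto simp: add.commute)
    then show "r \<in> ssum (Y j) (Y k)" using yx(1) by (simp add: ssum_I)
  qed
  show ?thesis unfolding im using sub by auto
qed

lemma C2: assumes h: "perm3 i j k" and n: "1 < n"
  shows "phi j (P (a_at i j n)) = rho (Meet (Yg j) (A_at k j n))"
proof -
  note pp = perm3_props[OF h]
  have p: "i \<in> {1,2,3}" "j \<in> {1,2,3}" "k \<in> {1,2,3}" using pp by auto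
  let ?R = "rho (A_at k j n)"
  have gR: "grp ?R" using rho_props[of k j n] pp by auto
  have s: "P (a_at i j n) = {e \<in> Z. coord i e \<in> ?R \<and> coord k e \<in> UNIV \<and> coord j e \<in> UNIV}"
    using L1[OF h] by simp
  have im: "phi j (P (a_at i j n)) = Y j \<inter> UNIV \<inter> ssum (Y i \<inter> ?R) (Y k \<inter> UNIV)"
    unfolding s by (rule img[OF perm3_rot(2)[OF h] gR grp_UNIV])
  obtain m where m: "n = Suc (Suc m)" using n by (cases n; cases "n - 1") auto
  have t: "third k j = i" "third i k = j" using pp by simp_all
  let ?R2 = "rho (A_at i k (Suc m))"
  have gR2: "grp ?R2" using rho_props[of i k "Suc m"] pp by auto
  have R1: "?R = ssum (Y k) (X j \<inter> ?R2)" unfolding m by (simp add: t)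
  have R2: "?R2 = ssum (Y i) (X k \<inter> rho (A_at j i m))" by (simp add: t)
  have YkR: "y \<in> ?R" if "y \<in> Y k" for y
  proof -
    have "0 \<in> X j \<inter> ?R2" using gR2 gX[OF p(2)] by (simp add: grp_0)
    then show ?thesis unfolding R1 using that by (rule ssum_left[rotated])
  qed
  have XjR: "x \<in> ?R" if "x \<in> X j" "x \<in> ?R2" for x
    unfolding R1 using that gY[OF p(3)] by (intro ssum_right) (simp_all add: grp_0)
  show ?thesis unfolding im
  proof (rule set_eqI, rule iffI)
    fix v assume "v \<in> Y j \<inter> UNIV \<inter> ssum (Y i \<inter> ?R) (Y k \<inter> UNIV)"
    then have v1: "v \<in> Y j" and "v \<in> ssum (Y i \<inter> ?R) (Y k \<inter> UNIV)" by simp_all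
    then obtain a b where ab0: "a \<in> ?R" "b \<in> Y k" "v = a + b" unfolding ssum_mem by blast
    note ab = v1 ab0
    have "v \<in> ?R" unfolding ab(4) using ab(2) YkR[OF ab(3)] gR by (rule grp_add[rotated 1])
    then show "v \<in> rho (Meet (Yg j) (A_at k j n))" using ab(1) by simp
  next
    fix v assume "v \<in> rho (Meet (Yg j) (A_at k j n))"
    then have v: "v \<in> Y j" "v \<in> ?R" by simp_all
    then obtain y x where yx: "y \<in> Y k" "x \<in> X j" "x \<in> ?R2" "v = y + x" unfolding R1 ssum_mem by blast
    then obtain y' x' where yx': "y' \<in> Y i" "x' \<in> X k" "x = y' + x'" unfolding R2 ssum_mem by blast
    have x'Y: "x' \<in> Y k" using XY[OF p(3)] yx'(2) by auto
    have y'eq: "y' = x - x'" using yx'(3) by simp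
    have "y' \<in> ?R" unfolding y'eq using XjR[OF yx(2) yx(3)] YkR[OF x'Y] gR by (rule grp_diff[rotated 1])
    moreover have "y + x' \<in> Y k" using yx(1) x'Y gY[OF p(3)] by (simp add: grp_add)
    moreover have "v = y' + (y + x')" using yx(4) yx'(3) by (simp add: ac_simps)
    ultimately have "v \<in> ssum (Y i \<inter> ?R) (Y k \<inter> UNIV)" using yx'(1) by (simp add: ssum_I)
    then show "v \<in> Y j \<inter> UNIV \<inter> ssum (Y i \<inter> ?R) (Y k \<inter> UNIV)" using v by simp
  qed
qed

lemma C2b: assumes h: "perm3 i j k"
  shows "phi j (P (a_at i j 1)) = rho (Meet (Yg j) (Meet (Join (Yg i) (Yg k)) (A_at k j 1)))"
proof -
  note pp = perm3_props[OF h]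
  have p: "i \<in> {1,2,3}" "j \<in> {1,2,3}" "k \<in> {1,2,3}" using pp by auto
  let ?R = "rho (A_at k j 1)"
  have gR: "grp ?R" using rho_props[of k j 1] pp by auto
  have L: "P (a_at i j 1) = {e \<in> Z. coord i e \<in> ?R}" by (rule L1[OF h])
  have s: "P (a_at i j 1) = {e \<in> Z. coord i e \<in> ?R \<and> coord k e \<in> UNIV \<and> coord j e \<in> UNIV}"
    unfolding L by simp
  have im: "phi j (P (a_at i j 1)) = Y j \<inter> UNIV \<inter> ssum (Y i \<inter> ?R) (Y k \<inter> UNIV)"
    unfolding s by (rule img[OF perm3_rot(2)[OF h] gR grp_UNIV])
  have R1: "?R = ssum (Y k) (X j \<inter> X0)" by simp
  have YkR: "y \<in> ?R" if "y \<in> Y k" for y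
  proof -
    have "0 \<in> X j \<inter> X0" using g0 gX[OF p(2)] by (simp add: grp_0)
    then show ?thesis unfolding R1 using that by (rule ssum_left[rotated])
  qed
  show ?thesis unfolding im
  proof (rule set_eqI, rule iffI)
    fix v assume "v \<in> Y j \<inter> UNIV \<inter> ssum (Y i \<inter> ?R) (Y k \<inter> UNIV)"
    then have v1: "v \<in> Y j" and "v \<in> ssum (Y i \<inter> ?R) (Y k \<inter> UNIV)" by simp_all
    then obtain a b where ab: "a \<in> Y i" "a \<in> ?R" "b \<in> Y k" "v = a + b" unfolding ssum_mem by blast
    have "v \<in> ?R" unfolding ab(4) using ab(2) YkR[OF ab(3)] gR by (rule grp_add[rotated 1])
    moreover have "v \<in> ssum (Y i) (Y k)" unfolding ab(4) using ab(1) ab(3) by (rule ssum_I)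
    ultimately show "v \<in> rho (Meet (Yg j) (Meet (Join (Yg i) (Yg k)) (A_at k j 1)))" using v1 by simp
  next
    fix v assume "v \<in> rho (Meet (Yg j) (Meet (Join (Yg i) (Yg k)) (A_at k j 1)))"
    then have v: "v \<in> Y j" "v \<in> ?R" "v \<in> ssum (Y i) (Y k)" by simp_all
    then obtain a b where ab: "a \<in> Y i" "b \<in> Y k" "v = a + b" unfolding ssum_mem by blast
    have aeq: "a = v - b" using ab(3) by simp
    have "a \<in> ?R" unfolding aeq using v(2) YkR[OF ab(2)] gR by (rule grp_diff[rotated 1])
    then have "v \<in> ssum (Y i \<inter> ?R) (Y k \<inter> UNIV)" unfolding ab(3) using ab(1) ab(2) by (intro ssum_I) simp_all
    then show "v \<in> Y j \<inter> UNIV \<inter> ssum (Y i \<inter> ?R) (Y k \<inter> UNIV)" using v by simp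
  qed
qed

lemma C3: assumes h: "perm3 i j k"
  shows "phi k (P (Meet (Yg i) (a_at i j n))) = rho (Meet (Yg k) (A_at j i (n + 1)))"
proof -
  note pp = perm3_props[OF h]
  have p: "i \<in> {1,2,3}" "j \<in> {1,2,3}" "k \<in> {1,2,3}" using pp by auto
  let ?R = "rho (A_at k j n)"
  have gR: "grp ?R" using rho_props[of k j n] pp by auto
  have s: "P (Meet (Yg i) (a_at i j n)) = {e \<in> Z. coord i e \<in> X i \<inter> ?R \<and> coord j e \<in> UNIV \<and> coord k e \<in> UNIV}"
    unfolding P_Meet_Yg L1[OF h] by auto
  have im: "phi k (P (Meet (Yg i) (a_at i j n))) = Y k \<inter> UNIV \<inter> ssum (Y i \<inter> (X i \<inter> ?R)) (Y j \<inter> UNIV)"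
    unfolding s by (rule img[OF h grp_Int[OF gX[OF p(1)] gR] grp_UNIV])
  have t: "third j i = k" using pp by simp
  have r: "rho (Meet (Yg k) (A_at j i (n + 1))) = Y k \<inter> ssum (Y j) (X i \<inter> ?R)" by (simp add: t)
  have e1: "Y i \<inter> (X i \<inter> ?R) = X i \<inter> ?R" using XY[OF p(1)] by auto
  show ?thesis unfolding im r e1 using ssum_comm[of "X i \<inter> ?R" "Y j"] by simp
qed

lemma C4: assumes h: "perm3 i j k"
  shows "phi i (P (A_at i j n)) = rho (Meet (Yg i) (Meet (Join (Yg j) (Yg k)) (a_at i k n)))"
proof -
  let ?Q = "Y i \<inter> ssum (Y j) (Y k) \<inter> rho (a_at i k n)"
  have s: "P (A_at i j n) = {e \<in> Z. coord j e \<in> UNIV \<and> coord k e \<in> UNIV \<and> coord i e \<in> ?Q}"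
    using L4[OF h] by simp
  have im: "phi i (P (A_at i j n)) = Y i \<inter> ?Q \<inter> ssum (Y j \<inter> UNIV) (Y k \<inter> UNIV)"
    unfolding s by (rule img[OF perm3_rot(1)[OF h] grp_UNIV grp_UNIV])
  show ?thesis unfolding im by auto
qed

lemma C5: assumes h: "perm3 i j k" and n: "1 \<le> n"
  shows "phi j (P (Meet (Yg k) (A_at i j n))) = rho (Meet (Yg j) (Meet (Join (Xg k) (Yg i)) (a_at i k n)))"
proof -
  note pp = perm3_props[OF h]
  have p: "i \<in> {1,2,3}" "j \<in> {1,2,3}" "k \<in> {1,2,3}" using pp by auto
  let ?Q' = "rho (a_at i k n)"
  let ?Q = "Y i \<inter> ssum (Y j) (Y k) \<inter> ?Q'"
  have gQ': "grp ?Q'" using rho_props[of i k n] pp by auto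
  have gQ: "grp ?Q" using gQ' gY[OF p(1)] gY[OF p(2)] gY[OF p(3)] by (simp add: grp_Int grp_ssum)
  have s: "P (Meet (Yg k) (A_at i j n)) = {e \<in> Z. coord i e \<in> ?Q \<and> coord k e \<in> X k \<and> coord j e \<in> UNIV}"
    unfolding P_Meet_Yg L4[OF h] by auto
  have im: "phi j (P (Meet (Yg k) (A_at i j n))) = Y j \<inter> UNIV \<inter> ssum (Y i \<inter> ?Q) (Y k \<inter> X k)"
    unfolding s by (rule img[OF perm3_rot(2)[OF h] gQ gX[OF p(3)]])
  obtain m where m: "n = Suc m" using n by (cases n) auto
  have t: "third i k = j" using pp by simp
  have Q'm: "?Q' = ssum (X i) (Y k \<inter> rho (a_at k j m))" unfolding m by (simp add: t)
  have XkQ: "x \<in> ?Q'" if "x \<in> X k" for x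
  proof -
    have "x \<in> rho (a_at k j m)" using rho_props[of k j m] pp that by auto
    moreover have "x \<in> Y k" using XY[OF p(3)] that by auto
    ultimately show ?thesis unfolding Q'm using gX[OF p(1)] by (intro ssum_right) (simp_all add: grp_0)
  qed
  show ?thesis unfolding im
  proof (rule set_eqI, rule iffI)
    fix v assume "v \<in> Y j \<inter> UNIV \<inter> ssum (Y i \<inter> ?Q) (Y k \<inter> X k)"
    then have v1: "v \<in> Y j" and "v \<in> ssum (Y i \<inter> ?Q) (Y k \<inter> X k)" by simp_all
    then obtain a b where ab: "a \<in> Y i" "a \<in> ?Q'" "b \<in> X k" "v = a + b" unfolding ssum_mem by blast
    have "v \<in> ?Q'" unfolding ab(4) using ab(2) XkQ[OF ab(3)] gQ' by (rule grp_add[rotated 1])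
    moreover have "v \<in> ssum (X k) (Y i)" using ssum_I[OF ab(3) ab(1)] ab(4) by (simp add: add.commute)
    ultimately show "v \<in> rho (Meet (Yg j) (Meet (Join (Xg k) (Yg i)) (a_at i k n)))" using v1 by simp
  next
    fix v assume "v \<in> rho (Meet (Yg j) (Meet (Join (Xg k) (Yg i)) (a_at i k n)))"
    then have v: "v \<in> Y j" "v \<in> ?Q'" "v \<in> ssum (X k) (Y i)" by simp_all
    then obtain x y where xy: "x \<in> X k" "y \<in> Y i" "v = x + y" unfolding ssum_mem by blast
    have xY: "x \<in> Y k" using XY[OF p(3)] xy(1) by auto
    have yeq: "y = v - x" using xy(3) by simp
    have yQ': "y \<in> ?Q'" unfolding yeq using v(2) XkQ[OF xy(1)] gQ' by (rule grp_diff[rotated 1])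
    have "- x \<in> Y k" using xY gY[OF p(3)] by (simp add: grp_neg)
    then have "v + - x \<in> ssum (Y j) (Y k)" using v(1) by (rule ssum_I[rotated])
    then have yS: "y \<in> ssum (Y j) (Y k)" unfolding yeq by simp
    have "y + x \<in> ssum (Y i \<inter> ?Q) (Y k \<inter> X k)" using xy(2) yQ' yS xY xy(1) by (intro ssum_I) simp_all
    moreover have "v = y + x" using xy(3) by (simp add: add.commute)
    ultimately show "v \<in> Y j \<inter> UNIV \<inter> ssum (Y i \<inter> ?Q) (Y k \<inter> X k)" using v by simp
  qed
qed

lemma C6: assumes h: "perm3 i j k"
  shows "phi k (P (Meet (Yg j) (A_at i j n))) = rho (Meet (Yg k) (a_at j i (n + 1)))"
proof -
  note pp = perm3_props[OF h]
  have p: "i \<in> {1,2,3}" "j \<in> {1,2,3}" "k \<in> {1,2,3}" using pp by auto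
  let ?Q' = "rho (a_at i k n)"
  let ?Q = "Y i \<inter> ssum (Y j) (Y k) \<inter> ?Q'"
  have gQ': "grp ?Q'" using rho_props[of i k n] pp by auto
  have gQ: "grp ?Q" using gQ' gY[OF p(1)] gY[OF p(2)] gY[OF p(3)] by (simp add: grp_Int grp_ssum)
  have s: "P (Meet (Yg j) (A_at i j n)) = {e \<in> Z. coord i e \<in> ?Q \<and> coord j e \<in> X j \<and> coord k e \<in> UNIV}"
    unfolding P_Meet_Yg L4[OF h] by auto
  have im: "phi k (P (Meet (Yg j) (A_at i j n))) = Y k \<inter> UNIV \<inter> ssum (Y i \<inter> ?Q) (Y j \<inter> X j)"
    unfolding s by (rule img[OF h gQ gX[OF p(2)]])
  have t: "third j i = k" using pp by simp
  have r: "rho (Meet (Yg k) (a_at j i (n + 1))) = Y k \<inter> ssum (X j) (Y i \<inter> ?Q')" by (simp add: t)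
  show ?thesis unfolding im r
  proof (rule set_eqI, rule iffI)
    fix v assume "v \<in> Y k \<inter> UNIV \<inter> ssum (Y i \<inter> ?Q) (Y j \<inter> X j)"
    then have v1: "v \<in> Y k" and "v \<in> ssum (Y i \<inter> ?Q) (Y j \<inter> X j)" by simp_all
    then obtain a b where ab: "a \<in> Y i" "a \<in> ?Q'" "b \<in> X j" "v = a + b" unfolding ssum_mem by blast
    have "b + a \<in> ssum (X j) (Y i \<inter> ?Q')" using ab by (intro ssum_I) simp_all
    then show "v \<in> Y k \<inter> ssum (X j) (Y i \<inter> ?Q')" using v1 ab(4) by (simp add: add.commute)
  next
    fix v assume "v \<in> Y k \<inter> ssum (X j) (Y i \<inter> ?Q')"
    then have v1: "v \<in> Y k" and "v \<in> ssum (X j) (Y i \<inter> ?Q')" by simp_all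
    then obtain x y where xy: "x \<in> X j" "y \<in> Y i" "y \<in> ?Q'" "v = x + y" unfolding ssum_mem by blast
    have xY: "x \<in> Y j" using XY[OF p(2)] xy(1) by auto
    have "- x \<in> Y j" using xY gY[OF p(2)] by (simp add: grp_neg)
    then have "- x + v \<in> ssum (Y j) (Y k)" using v1 by (rule ssum_I)
    then have yS: "y \<in> ssum (Y j) (Y k)" using xy(4) by simp
    have "y + x \<in> ssum (Y i \<inter> ?Q) (Y j \<inter> X j)" using xy yS xY by (intro ssum_I) simp_all
    moreover have "v = y + x" using xy(4) by (simp add: add.commute)
    ultimately show "v \<in> Y k \<inter> UNIV \<inter> ssum (Y i \<inter> ?Q) (Y j \<inter> X j)" using v1 by simp
  qed
qed

end

lemma sub_grp: "vector_space scale \<Longrightarrow> module.subspace scale S \<Longrightarrow> grp S"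
proof -
  assume a: "vector_space scale" "module.subspace scale S"
  have m: "module scale" using a(1) module_iff_vector_space by blast
  show "grp S" unfolding grp_def
    using module.subspace_0[OF m a(2)] module.subspace_add[OF m a(2)] module.subspace_neg[OF m a(2)]
    by blast
qed

theorem mainTheorem10:
  fixes scale :: "'k::field \<Rightarrow> 'v::ab_group_add \<Rightarrow> 'v"
    and X0 :: "'v set" and X Y :: "nat \<Rightarrow> 'v set"
    and i j k n :: nat
  assumes "vector_space scale"
    and "is_rep scale X0 X Y"
    and "{i, j, k} = {1, 2, 3}"
    and "n \<ge> 1"
  shows
    "phi i (PhiP_eval X Y (a_at i j n)) = rep_eval X0 X Y (Meet (Yg i) (A_at k j n))
   \<and> (n > 1 \<longrightarrow> phi j (PhiP_eval X Y (a_at i j n)) = rep_eval X0 X Y (Meet (Yg j) (A_at k j n)))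
   \<and> phi j (PhiP_eval X Y (a_at i j 1))
       = rep_eval X0 X Y (Meet (Yg j) (Meet (Join (Yg i) (Yg k)) (A_at k j 1)))
   \<and> phi k (PhiP_eval X Y (Meet (Yg i) (a_at i j n))) = rep_eval X0 X Y (Meet (Yg k) (A_at j i (n + 1)))
   \<and> phi i (PhiP_eval X Y (A_at i j n))
       = rep_eval X0 X Y (Meet (Yg i) (Meet (Join (Yg j) (Yg k)) (a_at i k n)))
   \<and> phi j (PhiP_eval X Y (Meet (Yg k) (A_at i j n)))
       = rep_eval X0 X Y (Meet (Yg j) (Meet (Join (Xg k) (Yg i)) (a_at i k n)))
   \<and> phi k (PhiP_eval X Y (Meet (Yg j) (A_at i j n))) = rep_eval X0 X Y (Meet (Yg k) (a_at j i (n + 1)))"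
proof -
  have r: "module.subspace scale X0" "\<And>l. l \<in> {1,2,3} \<Longrightarrow> module.subspace scale (X l)"
    "\<And>l. l \<in> {1,2,3} \<Longrightarrow> module.subspace scale (Y l)"
    "\<And>l. l \<in> {1,2,3} \<Longrightarrow> X l \<subseteq> Y l" "\<And>l. l \<in> {1,2,3} \<Longrightarrow> Y l \<subseteq> X0"
    using assms(2) unfolding is_rep_def by blast+
  interpret reps X0 X Y
  proof
    show "grp X0" using sub_grp[OF assms(1) r(1)] .
    fix l :: nat assume l: "l \<in> {1,2,3}"
    show "grp (X l)" using sub_grp[OF assms(1) r(2)[OF l]] .
    show "grp (Y l)" using sub_grp[OF assms(1) r(3)[OF l]] .
    show "X l \<subseteq> Y l" using r(4)[OF l] .
    show "Y l \<subseteq> X0" using r(5)[OF l] .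
  qed
  have h: "perm3 i j k" using assms(3) by (simp add: perm3_def)
  show ?thesis
  proof (intro conjI impI)
    show "phi i (PhiP_eval X Y (a_at i j n)) = rep_eval X0 X Y (Meet (Yg i) (A_at k j n))"
      by (rule C1[OF h assms(4)])
    show "phi j (PhiP_eval X Y (a_at i j n)) = rep_eval X0 X Y (Meet (Yg j) (A_at k j n))" if "n > 1"
      by (rule C2[OF h that])
  qed (rule C2b[OF h] C3[OF h] C4[OF h] C5[OF h assms(4)] C6[OF h])+
qed

end
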